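(* For every $\varepsilon>0$ there exists $n(\varepsilon)$ such that for all $n>n(\varepsilon)$, $$7-\varepsilon\ \le\ \mathrm{ifcov}(G_{n\times n})\ \le\ \frac{213}{25}=8.52,$$ where $G_{n\times n}$ is the $n\times n$ square grid graph.
   Context: For a graph $G$ and a function $D:V(G)\to\mathbb{N}$ (an integer pebble distribution, of size $|D|=\sum_v D(v)$), the weight function is $W_D(u)=\sum_{v\in V(G)}D(v)2^{-d(u,v)}$, where $d$ denotes graph distance. The optimal integer fractional covering ratio of $G$ is $$\mathrm{ifcov}(G)=\frac{|V(G)|}{\min\{|D| : D:V(G)\to\mathbb{N},\ W_D(u)\ge 1 \text{ for all } u\in V(G)\}},$$ i.e. the number of vertices divided by the minimum size of an integer distribution covering every vertex in the fractional sense. $G_{n\times n}$ is the Cartesian product of two paths on $n$ vertices. *)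

theory Defs
  imports "HOL-Analysis.Analysis"
begin

text \<open>A (finite, simple, undirected) graph is given by a vertex set V and an edge set
E of ordered pairs (assumed symmetric).\<close>

definition graph_dist :: "('a \<times> 'a) set \<Rightarrow> 'a \<Rightarrow> 'a \<Rightarrow> nat" where
  "graph_dist E u v = (LEAST k. (u, v) \<in> E ^^ k)"

definition weight :: "'a set \<Rightarrow> ('a \<times> 'a) set \<Rightarrow> ('a \<Rightarrow> nat) \<Rightarrow> 'a \<Rightarrow> real" where
  "weight V E D u = (\<Sum>v\<in>V. real (D v) * (1/2) ^ graph_dist E u v)"

definition covers :: "'a set \<Rightarrow> ('a \<times> 'a) set \<Rightarrow> ('a \<Rightarrow> nat) \<Rightarrow> bool" where
  "covers V E D \<longleftrightarrow> (\<forall>u\<in>V. weight V E D u \<ge> 1)"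

text \<open>Minimum size |D| = sum_v D(v) of a covering integer distribution
(distributions are functions on V; values outside V are irrelevant).\<close>
definition min_cover_size :: "'a set \<Rightarrow> ('a \<times> 'a) set \<Rightarrow> nat" where
  "min_cover_size V E = (LEAST s. \<exists>D. covers V E D \<and> (\<Sum>v\<in>V. D v) = s)"

definition ifcov :: "'a set \<Rightarrow> ('a \<times> 'a) set \<Rightarrow> real" where
  "ifcov V E = real (card V) / real (min_cover_size V E)"

definition grid_V :: "nat \<Rightarrow> (nat \<times> nat) set" where
  "grid_V n = {0..<n} \<times> {0..<n}"

definition grid_E :: "nat \<Rightarrow> ((nat \<times> nat) \<times> (nat \<times> nat)) set" where
  "grid_E n = {((i, j), (i', j')). (i, j) \<in> grid_V n \<and> (i', j') \<in> grid_V n \<and>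
      ((i = i' \<and> (j' = j + 1 \<or> j = j' + 1)) \<or> (j = j' \<and> (i' = i + 1 \<or> i = i' + 1)))}"

end

theory Submission
  imports Defs
begin

definition ad :: "nat \<Rightarrow> nat \<Rightarrow> nat" where "ad a b = (a - b) + (b - a)"

lemma relpow_md:
  "((a,b),(c,d)) \<in> (grid_E n)^^k \<Longrightarrow> ad a c + ad b d \<le> k"
proof (induction k arbitrary: c d)
  case 0 then show ?case by (simp add: ad_def)
next
  case (Suc k)
  then obtain y where y: "((a,b),y) \<in> (grid_E n)^^k" "(y,(c,d)) \<in> grid_E n"
    by (meson relpow_Suc_E)
  obtain e f where yef: "y = (e,f)" by (cases y)
  have "ad a e + ad b f \<le> k" using Suc.IH y yef by blast
  moreover have "ad e c + ad f d = 1" using y(2) yef by (auto simp: grid_E_def ad_def)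
  ultimately show ?case unfolding ad_def by arith
qed

lemma path:
  "a < n \<Longrightarrow> b < n \<Longrightarrow> c < n \<Longrightarrow> d < n \<Longrightarrow> ((a,b),(c,d)) \<in> (grid_E n)^^(ad a c + ad b d)"
proof (induction "ad a c + ad b d" arbitrary: a b)
  case 0 then show ?case by (simp add: ad_def)
next
  case (Suc k)
  show ?case
  proof (cases "a \<noteq> c")
    case True
    define a' where "a' = (if a < c then a + 1 else a - 1)"
    have e: "((a,b),(a',b)) \<in> grid_E n" using True Suc.prems unfolding a'_def
      by (auto simp: grid_E_def grid_V_def)
    have k: "k = ad a' c + ad b d" using Suc.hyps(2) True unfolding a'_def by (auto simp: ad_def)
    have "a' < n" using Suc.prems True unfolding a'_def by auto
    then have "((a',b),(c,d)) \<in> (grid_E n)^^k" using Suc.hyps(1)[OF k] Suc.prems k by simp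
    then show ?thesis using e Suc.hyps(2) relpow_Suc_I2 by metis
  next
    case False
    then have bd: "b \<noteq> d" using Suc.hyps(2) by (auto simp: ad_def)
    define b' where "b' = (if b < d then b + 1 else b - 1)"
    have e: "((a,b),(a,b')) \<in> grid_E n" using bd Suc.prems unfolding b'_def
      by (auto simp: grid_E_def grid_V_def)
    have k: "k = ad a c + ad b' d" using Suc.hyps(2) bd unfolding b'_def by (auto simp: ad_def)
    have "b' < n" using Suc.prems bd unfolding b'_def by auto
    then have "((a,b'),(c,d)) \<in> (grid_E n)^^k" using Suc.hyps(1)[OF k] Suc.prems k by simp
    then show ?thesis using e Suc.hyps(2) relpow_Suc_I2 by metis
  qed
qed

lemma gdist:
  "a < n \<Longrightarrow> b < n \<Longrightarrow> c < n \<Longrightarrow> d < n \<Longrightarrow> graph_dist (grid_E n) (a,b) (c,d) = ad a c + ad b d"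
  unfolding graph_dist_def
  by (rule Least_equality) (auto intro: path relpow_md)

lemma weight_grid:
  assumes "u \<in> grid_V n"
  shows "weight (grid_V n) (grid_E n) D u = (\<Sum>v\<in>grid_V n. real (D v) * (1/2) ^ (ad (fst u) (fst v) + ad (snd u) (snd v)))"
  unfolding weight_def
  by (rule sum.cong) (use assms in \<open>auto simp: grid_V_def gdist\<close>)

lemma geo_left: "(\<Sum>i\<le>a. (1/2::real)^(a-i)) = 2 - (1/2)^a"
proof (induction a)
  case 0 then show ?case by simp
next
  case (Suc a)
  have "(\<Sum>i\<le>a. (1/2::real)^(Suc a-i)) = (1/2) * (\<Sum>i\<le>a. (1/2::real)^(a-i))"
    by (simp add: sum_distrib_left Suc_diff_le)
  then show ?case using Suc by simp
qed

lemma geo_right: "Suc a \<le> n \<Longrightarrow> (\<Sum>i\<in>{Suc a..<n}. (1/2::real)^(i-a)) = 1 - (1/2)^(n-1-a)"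
proof (induction rule: dec_induct)
  case base then show ?case by simp
next
  case (step m)
  have mm: "m - a = Suc (m-1-a)" using step by auto
  have "(1::real) - (1/2)^(m-1-a) + (1/2)^(m-a) = 1 - (1/2)^(m-a)"
    unfolding mm by simp
  then show ?case using step by simp
qed

lemma g_bound:
  assumes "a < n"
  shows "(\<Sum>i<n. (1/2::real)^(ad i a)) \<le> 3 - (1/2)^a - (1/2)^(n-1-a)"
proof -
  have split: "{..<n} = {..a} \<union> {Suc a..<n}" using assms by auto
  have "(\<Sum>i<n. (1/2::real)^(ad i a)) = (\<Sum>i\<le>a. (1/2::real)^(ad i a)) + (\<Sum>i\<in>{Suc a..<n}. (1/2::real)^(ad i a))"
    unfolding split by (rule sum.union_disjoint) auto
  also have "(\<Sum>i\<le>a. (1/2::real)^(ad i a)) = (\<Sum>i\<le>a. (1/2::real)^(a-i))"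
    by (rule sum.cong) (auto simp: ad_def)
  also have "(\<Sum>i\<in>{Suc a..<n}. (1/2::real)^(ad i a)) = (\<Sum>i\<in>{Suc a..<n}. (1/2::real)^(i-a))"
    by (rule sum.cong) (auto simp: ad_def)
  finally show ?thesis using geo_left[of a] geo_right[of a n] assms by simp
qed

lemma g_le3: assumes "a < n" shows "(\<Sum>i<n. (1/2::real)^(ad i a)) \<le> 3"
proof -
  have "(1/2::real)^a \<ge> 0" "(1/2::real)^(n-1-a) \<ge> 0" by simp_all
  with g_bound[OF assms] show ?thesis by linarith
qed

lemma g_le2: assumes "a < n" "a = 0 \<or> a = n - 1" shows "(\<Sum>i<n. (1/2::real)^(ad i a)) \<le> 2"
proof -
  have "(1/2::real)^a \<ge> 0" "(1/2::real)^(n-1-a) \<ge> 0" by simp_all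
  moreover have "(1/2::real)^a = 1 \<or> (1/2::real)^(n-1-a) = 1" using assms by auto
  ultimately show ?thesis using g_bound[OF assms(1)] by linarith
qed

lemma ad_sym: "ad a b = ad b a" by (simp add: ad_def)
lemma ad_self[simp]: "ad a a = 0" by (simp add: ad_def)

lemma sum_times: "(\<Sum>y\<in>A\<times>B. f (fst y) * g (snd y)) = sum f A * (sum g B :: real)"
proof -
  have "sum f A * sum g B = (\<Sum>(x,y)\<in>A\<times>B. f x * g y)" by (simp add: sum_product sum.cartesian_product)
  also have "\<dots> = (\<Sum>y\<in>A\<times>B. f (fst y) * g (snd y))" by (rule sum.cong) auto
  finally show ?thesis by simp
qed

lemma f_prod: "(\<Sum>u\<in>grid_V n. (1/2::real)^(ad (fst u) a + ad (snd u) b))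
   = (\<Sum>i<n. (1/2)^(ad i a)) * (\<Sum>j<n. (1/2)^(ad j b))"
  unfolding power_add grid_V_def
  using sum_times[of "\<lambda>i. (1/2::real)^(ad i a)" "\<lambda>j. (1/2::real)^(ad j b)" "{0..<n}" "{0..<n}"]
  by (simp add: atLeast0LessThan)

lemma h_bound: assumes "1 \<le> c"
  shows "(1/2::real)^(ad (c-1) x) + (1/2)^(ad (c+1) x) \<le> (5/2) * (1/2)^(ad c x)"
proof (cases "x = c")
  case True then show ?thesis using assms by (simp add: ad_def)
next
  case False
  then consider k where "c = x + Suc k" | k where "x = c + Suc k" by (metis add_Suc_right less_imp_Suc_add linorder_neqE_nat)
  then show ?thesis
  proof cases
    case 1
    then have "ad (c-1) x = k" "ad (c+1) x = k + 2" "ad c x = k + 1" by (auto simp: ad_def)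
    then show ?thesis by simp
  next
    case 2
    then have "ad (c-1) x = k + 2" "ad (c+1) x = k" "ad c x = k + 1" using assms by (auto simp: ad_def)
    then show ?thesis by simp
  qed
qed

lemma h_self: "1 \<le> c \<Longrightarrow> (1/2::real)^(ad (c-1) c) + (1/2)^(ad (c+1) c) = 1"
  by (simp add: ad_def)

definition Diag :: "nat \<times> nat \<Rightarrow> (nat \<times> nat) set" where
  "Diag v = {fst v - 1, fst v + 1} \<times> {snd v - 1, snd v + 1}"

lemma diag_prod: assumes "1 \<le> a" "1 \<le> b"
  shows "(\<Sum>y\<in>Diag (a,b). (1/2::real)^(ad (fst y) x + ad (snd y) z))
   = ((1/2::real)^(ad (a-1) x) + (1/2)^(ad (a+1) x)) * ((1/2::real)^(ad (b-1) z) + (1/2)^(ad (b+1) z))"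
proof -
  have "(\<Sum>y\<in>Diag (a,b). (1/2::real)^(ad (fst y) x + ad (snd y) z))
     = (\<Sum>s\<in>{a-1,a+1}. (1/2::real)^(ad s x)) * (\<Sum>t\<in>{b-1,b+1}. (1/2::real)^(ad t z))"
    unfolding power_add Diag_def
    using sum_times[of "\<lambda>i. (1/2::real)^(ad i x)" "\<lambda>j. (1/2::real)^(ad j z)" "{a-1,a+1}" "{b-1,b+1}"]
    by simp
  also have "\<dots> = ((1/2::real)^(ad (a-1) x) + (1/2)^(ad (a+1) x)) * ((1/2::real)^(ad (b-1) z) + (1/2)^(ad (b+1) z))"
    using assms by simp
  finally show ?thesis .
qed

lemma diag_bound: assumes "1 \<le> a" "1 \<le> b" "(x,z) \<noteq> (a,b)"
  shows "(\<Sum>y\<in>Diag (a,b). (1/2::real)^(ad (fst y) x + ad (snd y) z)) \<le> 25/4 * (1/2)^(ad a x + ad b z)"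
proof -
  have "(\<Sum>y\<in>Diag (a,b). (1/2::real)^(ad (fst y) x + ad (snd y) z))
      \<le> ((5/2) * (1/2)^(ad a x)) * ((5/2) * (1/2)^(ad b z))"
    unfolding diag_prod[OF assms(1,2)]
    by (rule mult_mono) (use h_bound[OF assms(1), of x] h_bound[OF assms(2), of z] in \<open>auto simp: ad_sym\<close>)
  then show ?thesis by (simp add: power_add)
qed

lemma diag_self: assumes "1 \<le> a" "1 \<le> b"
  shows "(\<Sum>y\<in>Diag (a,b). (1/2::real)^(ad (fst y) a + ad (snd y) b)) = 1"
  unfolding diag_prod[OF assms] using h_self[OF assms(1)] h_self[OF assms(2)] by simp

definition pw :: "nat \<times> nat \<Rightarrow> nat \<times> nat \<Rightarrow> real" where
  "pw y w = (1/2::real)^(ad (fst y) (fst w) + ad (snd y) (snd w))"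

lemma W_pw: "u \<in> grid_V n \<Longrightarrow> weight (grid_V n) (grid_E n) D u = (\<Sum>w\<in>grid_V n. real (D w) * pw u w)"
  unfolding pw_def by (rule weight_grid)

lemma card_V: "card (grid_V n) = n * n" by (simp add: grid_V_def card_cartesian_product)

lemma interior_excess:
  assumes cov: "covers (grid_V n) (grid_E n) D" and ab: "1 \<le> a" "a+1 < n" "1 \<le> b" "b+1 < n"
  shows "weight (grid_V n) (grid_E n) D (a,b) - 1 \<ge> 12/25 * real (D (a,b))"
proof -
  let ?V = "grid_V n"
  let ?W = "weight (grid_V n) (grid_E n) D"
  define K where "K w = (\<Sum>y\<in>Diag (a,b). pw y w)" for w
  have abV: "(a,b) \<in> ?V" using ab by (auto simp: grid_V_def)
  have finV: "finite ?V" by (simp add: grid_V_def)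
  have DV: "Diag (a,b) \<subseteq> ?V" using ab by (auto simp: Diag_def grid_V_def)
  have cardD: "card (Diag (a,b)) = 4" unfolding Diag_def card_cartesian_product using ab by simp
  have "real (card (Diag (a,b))) = (\<Sum>y\<in>Diag (a,b). 1)" by simp
  also have "\<dots> \<le> (\<Sum>y\<in>Diag (a,b). ?W y)"
    by (rule sum_mono) (use cov DV in \<open>auto simp: covers_def\<close>)
  finally have four: "4 \<le> (\<Sum>y\<in>Diag (a,b). ?W y)" using cardD by simp
  have "(\<Sum>y\<in>Diag (a,b). ?W y) = (\<Sum>y\<in>Diag (a,b). \<Sum>w\<in>?V. real (D w) * pw y w)"
    by (rule sum.cong) (use DV W_pw in auto)
  also have "\<dots> = (\<Sum>w\<in>?V. \<Sum>y\<in>Diag (a,b). real (D w) * pw y w)" by (rule sum.swap)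
  also have "\<dots> = (\<Sum>w\<in>?V. real (D w) * K w)" by (simp add: K_def sum_distrib_left)
  also have "\<dots> = real (D (a,b)) * K (a,b) + (\<Sum>w\<in>?V-{(a,b)}. real (D w) * K w)"
    by (rule sum.remove[OF finV abV])
  also have "\<dots> \<le> real (D (a,b)) + (\<Sum>w\<in>?V-{(a,b)}. real (D w) * (25/4 * pw (a,b) w))"
  proof -
    have "K (a,b) = 1" using diag_self[OF ab(1) ab(3)] by (simp add: K_def pw_def)
    moreover have "(\<Sum>w\<in>?V-{(a,b)}. real (D w) * K w) \<le> (\<Sum>w\<in>?V-{(a,b)}. real (D w) * (25/4 * pw (a,b) w))"
    proof (rule sum_mono)
      fix w assume w: "w \<in> ?V-{(a,b)}"
      obtain x z where w': "w = (x,z)" by (cases w)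
      have "K w \<le> 25/4 * pw (a,b) w"
        using diag_bound[OF ab(1) ab(3), of x z] w w' by (simp add: K_def pw_def)
      then show "real (D w) * K w \<le> real (D w) * (25/4 * pw (a,b) w)" by (rule mult_left_mono) simp
    qed
    ultimately show ?thesis by simp
  qed
  also have "\<dots> = real (D (a,b)) + 25/4 * (?W (a,b) - real (D (a,b)))"
  proof -
    have "?W (a,b) = real (D (a,b)) * pw (a,b) (a,b) + (\<Sum>w\<in>?V-{(a,b)}. real (D w) * pw (a,b) w)"
      using W_pw[OF abV] sum.remove[OF finV abV, of "\<lambda>w. real (D w) * pw (a,b) w"] by simp
    moreover have "pw (a,b) (a,b) = 1" by (simp add: pw_def)
    ultimately show ?thesis by (simp add: sum_distrib_left algebra_simps)
  qed
  finally have key: "4 \<le> real (D (a,b)) + 25/4 * (?W (a,b) - real (D (a,b)))" using four by linarith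
  have W1: "?W (a,b) \<ge> 1" using cov abV by (auto simp: covers_def)
  show ?thesis
  proof (cases "D (a,b) = 0")
    case True then show ?thesis using W1 by simp
  next
    case False
    then have "real (D (a,b)) \<ge> 1" by simp
    moreover have "25 * ?W (a,b) \<ge> 16 + 21 * real (D (a,b))" using key by (simp add: algebra_simps)
    ultimately show ?thesis by linarith
  qed
qed

lemma f_bound:
  assumes "v \<in> grid_V n"
  shows "(\<Sum>u\<in>grid_V n. pw u v) \<le> 9"
    and "\<not> (1 \<le> fst v \<and> fst v + 1 < n \<and> 1 \<le> snd v \<and> snd v + 1 < n) \<Longrightarrow> (\<Sum>u\<in>grid_V n. pw u v) \<le> 6"
proof -
  have lt: "fst v < n" "snd v < n" using assms by (auto simp: grid_V_def)
  have eq: "(\<Sum>u\<in>grid_V n. pw u v) = (\<Sum>i<n. (1/2::real)^(ad i (fst v))) * (\<Sum>j<n. (1/2)^(ad j (snd v)))"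
    unfolding pw_def by (rule f_prod)
  have g1: "(\<Sum>i<n. (1/2::real)^(ad i (fst v))) \<le> 3" "(\<Sum>j<n. (1/2::real)^(ad j (snd v))) \<le> 3"
    using g_le3 lt by auto
  have nn: "(\<Sum>i<n. (1/2::real)^(ad i (fst v))) \<ge> 0" "(\<Sum>j<n. (1/2::real)^(ad j (snd v))) \<ge> 0"
    by (simp_all add: sum_nonneg)
  show "(\<Sum>u\<in>grid_V n. pw u v) \<le> 9" unfolding eq
    using mult_mono[OF g1 _ nn(2)] by simp
  assume nI: "\<not> (1 \<le> fst v \<and> fst v + 1 < n \<and> 1 \<le> snd v \<and> snd v + 1 < n)"
  then consider "fst v = 0 \<or> fst v = n - 1" | "snd v = 0 \<or> snd v = n - 1" using lt by linarith
  then show "(\<Sum>u\<in>grid_V n. pw u v) \<le> 6"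
  proof cases
    case 1
    then have h: "(\<Sum>i<n. (1/2::real)^(ad i (fst v))) \<le> 2" using g_le2 lt by blast
    show ?thesis unfolding eq using mult_mono[OF h g1(2)] nn by simp
  next
    case 2
    then have h: "(\<Sum>j<n. (1/2::real)^(ad j (snd v))) \<le> 2" using g_le2 lt by blast
    show ?thesis unfolding eq using mult_mono[OF g1(1) h] nn by simp
  qed
qed

lemma upper:
  assumes cov: "covers (grid_V n) (grid_E n) D"
  shows "real (n * n) \<le> 213/25 * real (\<Sum>v\<in>grid_V n. D v)"
proof -
  let ?V = "grid_V n"
  let ?W = "weight (grid_V n) (grid_E n) D"
  define intr where "intr v \<longleftrightarrow> (1 \<le> fst v \<and> fst v + 1 < n \<and> 1 \<le> snd v \<and> snd v + 1 < n)" for v :: "nat \<times> nat"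
  define e where "e u = (if intr u then ?W u - 1 else 0)" for u
  define f where "f v = (\<Sum>u\<in>?V. pw u v)" for v
  have fin: "finite ?V" by (simp add: grid_V_def)
  have "(\<Sum>u\<in>?V. ?W u) = (\<Sum>u\<in>?V. \<Sum>v\<in>?V. real (D v) * pw u v)"
    by (rule sum.cong) (auto simp: W_pw)
  also have "\<dots> = (\<Sum>v\<in>?V. \<Sum>u\<in>?V. real (D v) * pw u v)" by (rule sum.swap)
  also have "\<dots> = (\<Sum>v\<in>?V. real (D v) * f v)" by (simp add: f_def sum_distrib_left)
  finally have sw: "(\<Sum>u\<in>?V. ?W u) = (\<Sum>v\<in>?V. real (D v) * f v)" .
  have pt: "real (D v) * f v \<le> 213/25 * real (D v) + e v" if v: "v \<in> ?V" for v
  proof (cases "intr v")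
    case True
    obtain a b where vab: "v = (a,b)" by (cases v)
    have "?W v - 1 \<ge> 12/25 * real (D v)"
      using interior_excess[OF cov, of a b] True vab by (simp add: intr_def)
    moreover have "real (D v) * f v \<le> real (D v) * 9"
      using f_bound(1)[OF v] by (simp add: f_def mult_left_mono)
    ultimately show ?thesis using True by (simp add: e_def)
  next
    case False
    have "real (D v) * f v \<le> real (D v) * 6"
      using f_bound(2)[OF v] False by (simp add: f_def mult_left_mono intr_def)
    then show ?thesis using False by (simp add: e_def)
  qed
  have one: "1 \<le> ?W u - e u" if "u \<in> ?V" for u
    using cov that by (auto simp: covers_def e_def)
  have "real (n * n) = (\<Sum>u\<in>?V. 1)" by (simp add: card_V)
  also have "\<dots> \<le> (\<Sum>u\<in>?V. ?W u - e u)" by (rule sum_mono) (use one in auto)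
  also have "\<dots> = (\<Sum>v\<in>?V. real (D v) * f v) - (\<Sum>u\<in>?V. e u)" by (simp add: sum_subtractf sw)
  also have "\<dots> \<le> (\<Sum>v\<in>?V. 213/25 * real (D v) + e v) - (\<Sum>u\<in>?V. e u)"
    using sum_mono[of ?V "\<lambda>v. real (D v) * f v" "\<lambda>v. 213/25 * real (D v) + e v"] pt by simp
  also have "\<dots> = 213/25 * real (\<Sum>v\<in>?V. D v)" by (simp add: sum.distrib sum_distrib_left)
  finally show ?thesis .
qed

definition Dc :: "nat \<Rightarrow> nat \<times> nat \<Rightarrow> nat" where
  "Dc n v = (if (fst v + 2 * snd v) mod 7 = 0 \<or> fst v < 5 \<or> snd v < 5 \<or> n \<le> fst v + 5 \<or> n \<le> snd v + 5 then 1 else 0)"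

lemma W_ge_term:
  assumes "u \<in> grid_V n" "w \<in> grid_V n"
  shows "real (D w) * pw u w \<le> weight (grid_V n) (grid_E n) D u"
proof -
  have "real (D w) * pw u w \<le> (\<Sum>w\<in>grid_V n. real (D w) * pw u w)"
    by (rule member_le_sum) (use assms in \<open>auto simp: grid_V_def pw_def\<close>)
  then show ?thesis using W_pw[OF assms(1)] by simp
qed

lemma offsets_bound:
  assumes ab: "5 \<le> a" "a + 5 < n" "5 \<le> b" "b + 5 < n"
    and finO: "finite Off"
    and Off: "\<And>x y. (x,y) \<in> Off \<Longrightarrow> \<bar>x\<bar> \<le> 5 \<and> \<bar>y\<bar> \<le> 5 \<and> (int ((a + 2*b) mod 7) + x + 2*y) mod 7 = 0"
  shows "(\<Sum>(x,y)\<in>Off. (1/2::real)^(nat \<bar>x\<bar> + nat \<bar>y\<bar>)) \<le> weight (grid_V n) (grid_E n) (Dc n) (a,b)"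
proof -
  define sh where "sh p = (nat (int a + fst p), nat (int b + snd p))" for p :: "int \<times> int"
  have uV: "(a,b) \<in> grid_V n" using ab by (auto simp: grid_V_def)
  have inj: "inj_on sh Off"
  proof (rule inj_onI)
    fix p q assume "p \<in> Off" "q \<in> Off" "sh p = sh q"
    obtain x y where p: "p = (x,y)" by (cases p)
    obtain x' y' where q: "q = (x',y')" by (cases q)
    have b: "\<bar>x\<bar> \<le> 5" "\<bar>y\<bar> \<le> 5" "\<bar>x'\<bar> \<le> 5" "\<bar>y'\<bar> \<le> 5"
      using Off[of x y] Off[of x' y'] \<open>p \<in> Off\<close> \<open>q \<in> Off\<close> p q by auto
    have "nat (int a + x) = nat (int a + x')" "nat (int b + y) = nat (int b + y')"
      using \<open>sh p = sh q\<close> p q by (auto simp: sh_def)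
    then have "int a + x = int a + x'" "int b + y = int b + y'"
      using b ab by (simp_all add: eq_nat_nat_iff)
    then show "p = q" using p q by simp
  qed
  have shV: "sh ` Off \<subseteq> grid_V n"
  proof
    fix w assume "w \<in> sh ` Off"
    then obtain x y where "(x,y) \<in> Off" "w = sh (x,y)" by auto
    then show "w \<in> grid_V n" using Off[of x y] ab by (auto simp: sh_def grid_V_def)
  qed
  have tm: "real (Dc n (sh (x,y))) * pw (a,b) (sh (x,y)) = (1/2::real)^(nat \<bar>x\<bar> + nat \<bar>y\<bar>)"
    if xy: "(x,y) \<in> Off" for x y
  proof -
    have bd: "\<bar>x\<bar> \<le> 5" "\<bar>y\<bar> \<le> 5" and md: "(int ((a + 2*b) mod 7) + x + 2*y) mod 7 = 0"
      using Off[OF xy] by auto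
    have "int ((nat (int a + x) + 2 * nat (int b + y)) mod 7) = (int (nat (int a + x)) + 2 * int (nat (int b + y))) mod 7"
      by (simp add: zmod_int)
    also have "\<dots> = (int a + x + 2 * (int b + y)) mod 7" using bd ab by simp
    also have "\<dots> = 0" using md by (simp add: zmod_int) presburger
    finally have L: "(nat (int a + x) + 2 * nat (int b + y)) mod 7 = 0" by simp
    have D1: "Dc n (sh (x,y)) = 1" using L by (simp add: Dc_def sh_def)
    have "ad a (nat (int a + x)) = nat \<bar>x\<bar>" "ad b (nat (int b + y)) = nat \<bar>y\<bar>"
      using bd ab by (auto simp: ad_def)
    then show ?thesis using D1 by (simp add: pw_def sh_def)
  qed
  have "(\<Sum>(x,y)\<in>Off. (1/2::real)^(nat \<bar>x\<bar> + nat \<bar>y\<bar>)) = (\<Sum>p\<in>Off. real (Dc n (sh p)) * pw (a,b) (sh p))"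
    by (rule sum.cong) (auto simp: tm)
  also have "\<dots> = (\<Sum>w\<in>sh ` Off. real (Dc n w) * pw (a,b) w)"
    by (rule sum.reindex[OF inj, symmetric, unfolded comp_def])
  also have "\<dots> \<le> (\<Sum>w\<in>grid_V n. real (Dc n w) * pw (a,b) w)"
    by (rule sum_mono2) (use shV in \<open>auto simp: grid_V_def pw_def\<close>)
  also have "\<dots> = weight (grid_V n) (grid_E n) (Dc n) (a,b)" using W_pw[OF uV] by simp
  finally show ?thesis .
qed

lemma cov_case:
  assumes ab: "5 \<le> a" "a + 5 < n" "5 \<le> b" "b + 5 < n" "(a + 2*b) mod 7 = r"
    and finO: "finite Off"
    and Off: "\<forall>(x,y)\<in>Off. \<bar>x\<bar> \<le> 5 \<and> \<bar>y\<bar> \<le> 5 \<and> (int r + x + 2*y) mod 7 = 0"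
    and s: "1 \<le> (\<Sum>(x,y)\<in>Off. (1/2::real)^(nat \<bar>x\<bar> + nat \<bar>y\<bar>))"
  shows "1 \<le> weight (grid_V n) (grid_E n) (Dc n) (a,b)"
  using s offsets_bound[OF ab(1-4) finO] Off ab(5) by fastforce

lemma Dc_covers: "covers (grid_V n) (grid_E n) (Dc n)"
  unfolding covers_def
proof
  fix u assume uV: "u \<in> grid_V n"
  obtain a b where u: "u = (a,b)" by (cases u)
  show "1 \<le> weight (grid_V n) (grid_E n) (Dc n) u"
  proof (cases "Dc n (a,b) = 1")
    case True
    then show ?thesis using W_ge_term[OF uV uV, of "Dc n"] u by (simp add: pw_def)
  next
    case False
    then have ab: "5 \<le> a" "a + 5 < n" "5 \<le> b" "b + 5 < n" and r0: "(a + 2*b) mod 7 \<noteq> 0"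
      by (auto simp: Dc_def split: if_splits)
    have "(a + 2*b) mod 7 < 7" by simp
    then consider "(a + 2*b) mod 7 = 1" | "(a + 2*b) mod 7 = 2" | "(a + 2*b) mod 7 = 3"
      | "(a + 2*b) mod 7 = 4" | "(a + 2*b) mod 7 = 5" | "(a + 2*b) mod 7 = 6" using r0 by linarith
    then have "1 \<le> weight (grid_V n) (grid_E n) (Dc n) (a,b)"
    proof cases
      case 1 show ?thesis
        by (rule cov_case[OF ab 1, where Off="{(-1,0),(1,-1),(0,3),(-3,1),(0,-4)}"]) (simp_all add: power_numeral_reduce)
    next
      case 2 show ?thesis
        by (rule cov_case[OF ab 2, where Off="{(0,-1),(-2,0),(1,2),(-1,3),(2,-2)}"]) (simp_all add: power_numeral_reduce)
    next
      case 3 show ?thesis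
        by (rule cov_case[OF ab 3, where Off="{(-1,-1),(0,2),(-3,0),(1,-2),(2,1),(4,0),(-2,3),(0,-5)}"]) (simp_all add: power_numeral_reduce)
    next
      case 4 show ?thesis
        by (rule cov_case[OF ab 4, where Off="{(0,-2),(1,1),(-2,-1),(-1,2),(3,0),(-4,0),(0,5),(2,-3)}"]) (simp_all add: power_numeral_reduce)
    next
      case 5 show ?thesis
        by (rule cov_case[OF ab 5, where Off="{(0,1),(2,0),(-1,-2),(-3,-1),(-2,2)}"]) (simp_all add: power_numeral_reduce)
    next
      case 6 show ?thesis
        by (rule cov_case[OF ab 6, where Off="{(1,0),(-1,1),(0,-3),(-2,-2),(0,4)}"]) (simp_all add: power_numeral_reduce)
    qed
    then show ?thesis using u by simp
  qed
qed

lemma ind_card: "(\<Sum>i<(n::nat). if P i then 1 else 0::nat) = card {i\<in>{..<n}. P i}"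
proof -
  have "card {i\<in>{..<n}. P i} = (\<Sum>i\<in>{i\<in>{..<n}. P i}. 1)" by (rule card_eq_sum)
  also have "\<dots> = (\<Sum>i<n. if P i then 1 else 0)" by (rule sum.inter_filter) simp
  finally show ?thesis by (rule sym)
qed

lemma m14: assumes "m < 14" "m mod 7 = (0::nat)" shows "m = 0 \<or> m = 7"
proof (cases "m < 7")
  case True then show ?thesis using assms by simp
next
  case False
  then have "m mod 7 = (m - 7) mod 7" by (simp add: le_mod_geq)
  also have "\<dots> = m - 7" using assms(1) by simp
  finally show ?thesis using assms False by simp
qed
lemma modcanc: assumes "(x + c) mod 7 = (0::nat)" "(y + c) mod 7 = 0" shows "x mod 7 = y mod 7"
proof -
  have a: "(x mod 7 + c mod 7) mod 7 = 0" using assms(1) by (simp add: mod_add_eq)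
  have b: "(y mod 7 + c mod 7) mod 7 = 0" using assms(2) by (simp add: mod_add_eq)
  have l: "x mod 7 < 7" "y mod 7 < 7" "c mod 7 < 7" by simp_all
  have "x mod 7 + c mod 7 = 0 \<or> x mod 7 + c mod 7 = 7" by (rule m14) (use a l in auto)
  moreover have "y mod 7 + c mod 7 = 0 \<or> y mod 7 + c mod 7 = 7" by (rule m14) (use b l in auto)
  ultimately show ?thesis using l by linarith
qed
lemma cardL: "card {i\<in>{..<n}. (i + c) mod 7 = (0::nat)} \<le> n div 7 + 1"
proof -
  have "card {i\<in>{..<n}. (i + c) mod 7 = (0::nat)} \<le> card {..n div 7}"
  proof (rule card_inj_on_le[where f="\<lambda>i. i div 7"])
    show "inj_on (\<lambda>i. i div 7) {i\<in>{..<n}. (i + c) mod 7 = 0}"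
    proof (rule inj_onI)
      fix i j assume "i \<in> {i\<in>{..<n}. (i + c) mod 7 = 0}" "j \<in> {i\<in>{..<n}. (i + c) mod 7 = 0}" "i div 7 = j div 7"
      then have "(i + c) mod 7 = 0" "(j + c) mod 7 = 0" by blast+
      then have m: "i mod 7 = j mod 7" by (rule modcanc)
      show "i = j" using m \<open>i div 7 = j div 7\<close> by (metis div_mult_mod_eq)
    qed
    show "(\<lambda>i. i div 7) ` {i\<in>{..<n}. (i + c) mod 7 = 0} \<subseteq> {..n div 7}"
      by (auto intro: div_le_mono)
  qed simp
  then show ?thesis by simp
qed

lemma cardS: "card {i\<in>{..<n}. i < 5 \<or> n \<le> i + (5::nat)} \<le> 10"
proof -
  have "{i\<in>{..<n}. i < 5 \<or> n \<le> i + (5::nat)} \<subseteq> {..<5} \<union> {n-5..<n}" by auto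
  then have "card {i\<in>{..<n}. i < 5 \<or> n \<le> i + (5::nat)} \<le> card ({..<5} \<union> {n-5..<n})"
    by (rule card_mono[rotated]) simp
  also have "\<dots> \<le> card {..<5::nat} + card {n-5..<n}" by (rule card_Un_le)
  also have "\<dots> \<le> 10" by simp
  finally show ?thesis .
qed

lemma Dc_size: "(\<Sum>v\<in>grid_V n. Dc n v) \<le> n * (n div 7 + 1) + 20 * n"
proof -
  define cL where "cL i j = (if (i + 2*j) mod 7 = 0 then 1 else 0::nat)" for i j :: nat
  define s where "s k = (if k < 5 \<or> n \<le> k + 5 then 1 else 0::nat)" for k :: nat
  have "(\<Sum>i<n. \<Sum>j<n. Dc n (i,j)) = (\<Sum>(i,j)\<in>{..<n}\<times>{..<n}. Dc n (i,j))"
    by (rule sum.cartesian_product)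
  then have e1: "(\<Sum>v\<in>grid_V n. Dc n v) = (\<Sum>i<n. \<Sum>j<n. Dc n (i,j))"
    by (simp add: grid_V_def atLeast0LessThan)
  have "(\<Sum>v\<in>grid_V n. Dc n v) = (\<Sum>j<n. \<Sum>i<n. Dc n (i,j))"
    unfolding e1 by (rule sum.swap)
  also have "\<dots> \<le> (\<Sum>j<n. \<Sum>i<n. cL i j + s i + s j)"
    by (rule sum_mono)+ (auto simp: Dc_def cL_def s_def)
  also have "\<dots> = (\<Sum>j<n. (\<Sum>i<n. cL i j) + (\<Sum>i<n. s i) + n * s j)"
    by (simp add: sum.distrib)
  also have "\<dots> \<le> (\<Sum>j<n. (n div 7 + 1) + 10 + n * s j)"
  proof (rule sum_mono)
    fix j
    have "(\<Sum>i<n. cL i j) \<le> n div 7 + 1" unfolding cL_def ind_card using cardL[of n "2*j"] by simp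
    moreover have "(\<Sum>i<n. s i) \<le> 10" unfolding s_def ind_card using cardS[of n] by simp
    ultimately show "(\<Sum>i<n. cL i j) + (\<Sum>i<n. s i) + n * s j \<le> (n div 7 + 1) + 10 + n * s j" by simp
  qed
  also have "\<dots> = n * (n div 7 + 1) + 10 * n + n * (\<Sum>j<n. s j)"
    by (simp add: sum.distrib sum_distrib_left algebra_simps)
  also have "\<dots> \<le> n * (n div 7 + 1) + 10 * n + n * 10"
    using cardS[of n] unfolding s_def ind_card by simp
  finally show ?thesis by simp
qed

theorem mainTheorem4:
  fixes \<epsilon> :: real
  assumes "\<epsilon> > 0"
  shows "\<exists>N::nat. \<forall>n>N. 7 - \<epsilon> \<le> ifcov (grid_V n) (grid_E n)
                         \<and> ifcov (grid_V n) (grid_E n) \<le> 213 / 25"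
proof (intro exI allI impI)
  fix n assume nN: "nat \<lceil>1029 / \<epsilon>\<rceil> < n"
  define m where "m = min_cover_size (grid_V n) (grid_E n)"
  have ex: "\<exists>s D. covers (grid_V n) (grid_E n) D \<and> (\<Sum>v\<in>grid_V n. D v) = s"
    using Dc_covers by blast
  obtain D0 where D0: "covers (grid_V n) (grid_E n) D0" "(\<Sum>v\<in>grid_V n. D0 v) = m"
    using LeastI_ex[OF ex] unfolding m_def min_cover_size_def by blast
  have up: "real (n * n) \<le> 213/25 * real m" using upper[OF D0(1)] D0(2) by simp
  have "m \<le> (\<Sum>v\<in>grid_V n. Dc n v)"
    unfolding m_def min_cover_size_def by (rule Least_le) (use Dc_covers in blast)
  also have "\<dots> \<le> n * (n div 7 + 1) + 20 * n" by (rule Dc_size)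
  finally have mle: "real m \<le> real n * (real n / 7) + 21 * real n"
  proof -
    assume h: "m \<le> n * (n div 7 + 1) + 20 * n"
    have "n div 7 * 7 \<le> n" by (metis div_mult_mod_eq le_add1)
    then have "real (n div 7) * 7 \<le> real n" by (metis of_nat_le_iff of_nat_mult of_nat_numeral)
    then have "real (n div 7) \<le> real n / 7" by (simp add: le_divide_eq)
    then have "real n * real (n div 7) \<le> real n * (real n / 7)" by (rule mult_left_mono) simp
    moreover have "real m \<le> real n * real (n div 7) + 21 * real n"
    proof -
      have "real m \<le> real (n * (n div 7 + 1) + 20 * n)" using h by (simp only: of_nat_le_iff)
      then show ?thesis by (simp add: algebra_simps)
    qed
    ultimately show ?thesis by linarith
  qed
  have n1: "1 \<le> n" using nN by simp
  have rn: "real n \<ge> 1" using n1 by simp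
  have mpos: "real m > 0"
  proof -
    have "1 * 1 \<le> n * n" using n1 by (rule mult_le_mono) (rule n1)
    then have "real (n * n) \<ge> 1" by (metis mult_1 of_nat_1 of_nat_le_iff)
    then show ?thesis using up by linarith
  qed
  have ifc: "ifcov (grid_V n) (grid_E n) = real n * real n / real m"
    unfolding ifcov_def m_def[symmetric] by (simp add: card_V)
  show "7 - \<epsilon> \<le> ifcov (grid_V n) (grid_E n) \<and> ifcov (grid_V n) (grid_E n) \<le> 213 / 25"
  proof
    show "ifcov (grid_V n) (grid_E n) \<le> 213 / 25"
      unfolding ifc using up mpos by (simp add: divide_le_eq)
  next
    have en: "\<epsilon> * real n \<ge> 1029"
    proof -
      have "1029 / \<epsilon> \<le> real n" using nN by linarith
      then show ?thesis using assms by (simp add: divide_le_eq mult.commute)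
    qed
    have en2: "\<epsilon> * real n * real n \<ge> 1029 * real n"
      using mult_right_mono[OF en, of "real n"] by simp
    have "(7 - \<epsilon>) * real m \<le> real n * real n"
    proof (cases "7 - \<epsilon> \<le> 0")
      case True then show ?thesis using mpos
        by (smt (verit) mult_nonpos_nonneg of_nat_0_le_iff zero_le_mult_iff)
    next
      case False
      then have "(7 - \<epsilon>) * real m \<le> (7 - \<epsilon>) * (real n * (real n / 7) + 21 * real n)"
        using mle by (simp add: mult_left_mono)
      also have "\<dots> = real n * real n + 147 * real n - (\<epsilon> * real n * real n) / 7 - 21 * (\<epsilon> * real n)"
        by (simp add: algebra_simps add_divide_distrib[symmetric])
      also have "\<dots> \<le> real n * real n" using en en2 assms rn by linarith
      finally show ?thesis .
    qed
    then show "7 - \<epsilon> \<le> ifcov (grid_V n) (grid_E n)"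
      unfolding ifc using mpos by (simp add: le_divide_eq)
  qed
qed

end
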